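(* For every instance $(d,\mathcal{C},k)$ of $k$-center and every execution of the reverse greedy algorithm on it (with any tie-breaking), the returned set $F_{n-k}$ satisfies $\mathrm{cost}(F_{n-k})\le 2k\cdot\mathrm{OPT}$; i.e., reverse greedy is a $2k$-approximation for $k$-center.
   Context: An instance of $k$-center consists of a finite metric space $(d,\mathcal{C})$ with $|\mathcal{C}|=n$ and an integer $k\ge 1$ with $k\le n$; every point is both a client and a potential facility. For nonempty $F\subseteq\mathcal{C}$, $d(c,F):=\min_{f\in F}d(c,f)$ and $\mathrm{cost}(F):=\max_{c\in\mathcal{C}}d(c,F)$; $\mathrm{OPT}$ is the minimum of $\mathrm{cost}(F)$ over $F\subseteq\mathcal{C}$ with $|F|\le k$. Reverse greedy: $F_0:=\mathcal{C}$, and for $i=1,\dots,n-k$, $F_i:=F_{i-1}\setminus\{f_i\}$ where $f_i\in\arg\min_{f\in F_{i-1}}\mathrm{cost}(F_{i-1}\setminus\{f\})$, ties broken arbitrarily; output $F_{n-k}$. *)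

theory Defs
  imports Complex_Main
begin

definition metric_on :: "'a set \<Rightarrow> ('a \<Rightarrow> 'a \<Rightarrow> real) \<Rightarrow> bool" where
  "metric_on C d \<longleftrightarrow>
     (\<forall>x\<in>C. \<forall>y\<in>C. d x y \<ge> 0) \<and>
     (\<forall>x\<in>C. \<forall>y\<in>C. d x y = 0 \<longleftrightarrow> x = y) \<and>
     (\<forall>x\<in>C. \<forall>y\<in>C. d x y = d y x) \<and>
     (\<forall>x\<in>C. \<forall>y\<in>C. \<forall>z\<in>C. d x z \<le> d x y + d y z)"

definition dist_set :: "('a \<Rightarrow> 'a \<Rightarrow> real) \<Rightarrow> 'a \<Rightarrow> 'a set \<Rightarrow> real" where
  "dist_set d c F = Min ((\<lambda>f. d c f) ` F)"

definition kcost :: "'a set \<Rightarrow> ('a \<Rightarrow> 'a \<Rightarrow> real) \<Rightarrow> 'a set \<Rightarrow> real" where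
  "kcost C d F = Max ((\<lambda>c. dist_set d c F) ` C)"

definition kopt :: "'a set \<Rightarrow> ('a \<Rightarrow> 'a \<Rightarrow> real) \<Rightarrow> nat \<Rightarrow> real" where
  "kopt C d k = Min (kcost C d ` {F. F \<subseteq> C \<and> F \<noteq> {} \<and> card F \<le> k})"

definition reverse_greedy_run :: "'a set \<Rightarrow> ('a \<Rightarrow> 'a \<Rightarrow> real) \<Rightarrow> nat \<Rightarrow> (nat \<Rightarrow> 'a set) \<Rightarrow> bool" where
  "reverse_greedy_run C d k F \<longleftrightarrow>
     F 0 = C \<and>
     (\<forall>i\<in>{1..card C - k}. \<exists>f\<in>F (i - 1).
        F i = F (i - 1) - {f} \<and>
        (\<forall>g\<in>F (i - 1). kcost C d (F (i - 1) - {f}) \<le> kcost C d (F (i - 1) - {g})))"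

end

theory Submission
  imports Defs
begin

lemma ds_le: "finite F \<Longrightarrow> f \<in> F \<Longrightarrow> dist_set d c F \<le> d c f"
  unfolding dist_set_def by (rule Min_le) auto

lemma ds_ex: "finite F \<Longrightarrow> F \<noteq> {} \<Longrightarrow> \<exists>f\<in>F. dist_set d c F = d c f"
proof -
  assume "finite F" "F \<noteq> {}"
  then have "Min ((\<lambda>f. d c f) ` F) \<in> (\<lambda>f. d c f) ` F" by (intro Min_in) auto
  then show ?thesis unfolding dist_set_def by auto
qed

lemma kc_ge: "finite C \<Longrightarrow> c \<in> C \<Longrightarrow> dist_set d c F \<le> kcost C d F"
  unfolding kcost_def by (rule Max_ge) auto

lemma kc_le: "finite C \<Longrightarrow> C \<noteq> {} \<Longrightarrow> (\<And>c. c \<in> C \<Longrightarrow> dist_set d c F \<le> X) \<Longrightarrow> kcost C d F \<le> X"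
  unfolding kcost_def by (subst Max_le_iff) auto

lemma costZ:
  assumes "finite C" "C \<noteq> {}" "metric_on C d" "F \<subseteq> C" "F \<noteq> {}"
    and sig: "\<And>x. x \<in> C \<Longrightarrow> \<sigma> x \<in> C \<and> d x (\<sigma> x) \<le> r"
  shows "kcost C d F \<le> kcost C d (\<sigma> ` F) + r"
proof (rule kc_le[OF assms(1,2)])
  fix c assume c: "c \<in> C"
  have fin: "finite F" using assms(1,4) finite_subset by blast
  obtain f where f: "f \<in> F" "dist_set d c (\<sigma> ` F) = d c (\<sigma> f)"
    using ds_ex[of "\<sigma> ` F" d c] fin assms(5) by auto
  have fC: "f \<in> C" using f assms(4) by auto
  have sf: "\<sigma> f \<in> C" "d f (\<sigma> f) \<le> r" using sig[OF fC] by auto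
  have "dist_set d c F \<le> d c f" using ds_le[OF fin f(1)] .
  also have "\<dots> \<le> d c (\<sigma> f) + d (\<sigma> f) f"
    using assms(3) c fC sf unfolding metric_on_def by blast
  also have "d (\<sigma> f) f = d f (\<sigma> f)"
    using assms(3) fC sf unfolding metric_on_def by blast
  also have "d c (\<sigma> f) \<le> kcost C d (\<sigma> ` F)"
    using f(2) kc_ge[OF assms(1) c, of d "\<sigma> ` F"] by simp
  finally show "dist_set d c F \<le> kcost C d (\<sigma> ` F) + r" using sf by simp
qed

lemma Zcost:
  assumes "finite C" "C \<noteq> {}" "metric_on C d" "F \<subseteq> C" "F \<noteq> {}"
    and sig: "\<And>x. x \<in> C \<Longrightarrow> \<sigma> x \<in> C \<and> d x (\<sigma> x) \<le> r"
  shows "kcost C d (\<sigma> ` F) \<le> kcost C d F + r"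
proof (rule kc_le[OF assms(1,2)])
  fix c assume c: "c \<in> C"
  have fin: "finite F" using assms(1,4) finite_subset by blast
  obtain f where f: "f \<in> F" "dist_set d c F = d c f"
    using ds_ex[of F d c] fin assms(5) by auto
  have fC: "f \<in> C" using f assms(4) by auto
  have sf: "\<sigma> f \<in> C" "d f (\<sigma> f) \<le> r" using sig[OF fC] by auto
  have "dist_set d c (\<sigma> ` F) \<le> d c (\<sigma> f)" using ds_le[of "\<sigma> ` F" "\<sigma> f"] fin f(1) by auto
  also have "\<dots> \<le> d c f + d f (\<sigma> f)"
    using assms(3) c fC sf unfolding metric_on_def by blast
  also have "d c f \<le> kcost C d F"
    using f(2) kc_ge[OF assms(1) c, of d F] by simp
  finally show "dist_set d c (\<sigma> ` F) \<le> kcost C d F + r" using sf by simp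
qed

theorem lemma2:
  fixes C :: "'a set" and d :: "'a \<Rightarrow> 'a \<Rightarrow> real" and k :: nat and F :: "nat \<Rightarrow> 'a set"
  assumes "finite C" and "metric_on C d"
    and "1 \<le> k" and "k \<le> card C"
    and "reverse_greedy_run C d k F"
  shows "kcost C d (F (card C - k)) \<le> 2 * real k * kopt C d k"
proof -
  note fin = assms(1) and met = assms(2)
  have Cne: "C \<noteq> {}" using assms(3,4) by auto
  define S where "S = {F. F \<subseteq> C \<and> F \<noteq> {} \<and> card F \<le> k}"
  have Sfin: "finite S" unfolding S_def using fin by (rule rev_finite_subset[OF finite_Pow_iff[THEN iffD2]]) auto
  obtain c0 where "c0 \<in> C" using Cne by auto
  then have "{c0} \<in> S" unfolding S_def using assms(3) by auto
  then have Sne: "S \<noteq> {}" by auto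
  have "kopt C d k \<in> kcost C d ` S" unfolding kopt_def S_def[symmetric]
    using Sfin Sne by (intro Min_in) auto
  then obtain Opt where Opt: "Opt \<in> S" and r: "kcost C d Opt = kopt C d k" by auto
  define r where "r = kopt C d k"
  have OC: "Opt \<subseteq> C" and One: "Opt \<noteq> {}" and Ok: "card Opt \<le> k" using Opt unfolding S_def by auto
  have Ofin: "finite Opt" using OC fin finite_subset by blast
  have ex: "\<forall>c\<in>C. \<exists>oo. oo \<in> Opt \<and> d c oo \<le> r"
  proof
    fix c assume c: "c \<in> C"
    obtain oo where "oo \<in> Opt" "dist_set d c Opt = d c oo" using ds_ex[OF Ofin One] by blast
    moreover have "dist_set d c Opt \<le> r" using kc_ge[OF fin c, of d Opt] r unfolding r_def by simp
    ultimately show "\<exists>oo. oo \<in> Opt \<and> d c oo \<le> r" by auto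
  qed
  define \<sigma> where "\<sigma> c = (SOME oo. oo \<in> Opt \<and> d c oo \<le> r)" for c
  have sigO: "\<sigma> c \<in> Opt \<and> d c (\<sigma> c) \<le> r" if "c \<in> C" for c
    unfolding \<sigma>_def using someI_ex[OF ex[rule_format, OF that]] .
  have sig: "\<sigma> x \<in> C \<and> d x (\<sigma> x) \<le> r" if "x \<in> C" for x using sigO[OF that] OC by auto
  have r0: "0 \<le> r"
  proof -
    have s0: "\<sigma> c0 \<in> C" "d c0 (\<sigma> c0) \<le> r" using sig[OF \<open>c0 \<in> C\<close>] by auto
    have "0 \<le> d c0 (\<sigma> c0)" using met \<open>c0 \<in> C\<close> s0(1) unfolding metric_on_def by blast
    then show ?thesis using s0(2) by linarith
  qed
  define N where "N = card C - k"
  have run0: "F 0 = C" using assms(5) unfolding reverse_greedy_run_def by (elim conjE)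
  have runS: "\<exists>f\<in>F i. F (Suc i) = F i - {f} \<and>
        (\<forall>g\<in>F i. kcost C d (F i - {f}) \<le> kcost C d (F i - {g}))" if "i < N" for i
  proof -
    have "Suc i \<in> {1..card C - k}" using that unfolding N_def by auto
    then show ?thesis using assms(5) unfolding reverse_greedy_run_def by fastforce
  qed
  have inv: "F i \<subseteq> C \<and> card (F i) = card C - i \<and>
     kcost C d (\<sigma> ` F i) \<le> r + 2 * r * (real (card Opt) - real (card (\<sigma> ` F i)))" if "i \<le> N" for i
    using that
  proof (induction i)
    case 0
    have "kcost C d (\<sigma> ` C) \<le> r"
    proof (rule kc_le[OF fin Cne])
      fix c assume c: "c \<in> C"
      have "dist_set d c (\<sigma> ` C) \<le> d c (\<sigma> c)" using ds_le[of "\<sigma> ` C" "\<sigma> c"] fin c by auto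
      then show "dist_set d c (\<sigma> ` C) \<le> r" using sig[OF c] by auto
    qed
    moreover have "card (\<sigma> ` C) \<le> card Opt" using sigO Ofin by (intro card_mono) auto
    then have "0 \<le> real (card Opt) - real (card (\<sigma> ` C))" by simp
    then have "0 \<le> 2 * r * (real (card Opt) - real (card (\<sigma> ` C)))" using r0 by simp
    ultimately show ?case using run0 by simp
  next
    case (Suc i)
    then have IH: "F i \<subseteq> C" "card (F i) = card C - i"
      "kcost C d (\<sigma> ` F i) \<le> r + 2 * r * (real (card Opt) - real (card (\<sigma> ` F i)))"
      and iN: "i < N" by auto
    obtain f where f: "f \<in> F i" "F (Suc i) = F i - {f}"
      and gr: "\<And>g. g \<in> F i \<Longrightarrow> kcost C d (F i - {f}) \<le> kcost C d (F i - {g})"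
      using runS[OF iN] by blast
    have Fifin: "finite (F i)" using IH(1) fin finite_subset by blast
    have cardFi: "card (F i) > k" using IH(2) iN N_def assms(4) by linarith
    have imO: "\<sigma> ` F i \<subseteq> Opt" using sigO IH(1) by auto
    have "card (\<sigma> ` F i) \<le> card Opt" using imO Ofin card_mono by blast
    then have "card (\<sigma> ` F i) < card (F i)" using Ok cardFi by linarith
    then have "\<not> inj_on \<sigma> (F i)" using card_image by fastforce
    then obtain g g' where gg: "g \<in> F i" "g' \<in> F i" "g \<noteq> g'" "\<sigma> g = \<sigma> g'"
      unfolding inj_on_def by blast
    have img: "\<sigma> ` (F i - {g}) = \<sigma> ` F i" using gg by auto
    have "kcost C d (F (Suc i)) \<le> kcost C d (F i - {g})" using gr[OF gg(1)] f(2) by simp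
    also have "\<dots> \<le> kcost C d (\<sigma> ` (F i - {g})) + r"
      using gg IH(1) by (intro costZ[OF fin Cne met _ _ sig]) auto
    finally have step: "kcost C d (F (Suc i)) \<le> kcost C d (\<sigma> ` F i) + r" using img by simp
    have sub: "F (Suc i) \<subseteq> C" using f IH(1) by auto
    have cardS: "card (F (Suc i)) = card C - Suc i" using f IH(2) Fifin by simp
    have neS: "F (Suc i) \<noteq> {}" 
    proof -
      have "card (F (Suc i)) \<ge> 1" using cardS Suc.prems N_def assms(3,4) by linarith
      then show ?thesis by auto
    qed
    have Zs: "kcost C d (\<sigma> ` F (Suc i)) \<le> kcost C d (F (Suc i)) + r"
      by (rule Zcost[OF fin Cne met sub neS sig])
    show ?case
    proof (cases "\<sigma> ` F (Suc i) = \<sigma> ` F i")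
      case True
      then show ?thesis using IH sub cardS by simp
    next
      case False
      have "\<sigma> ` F (Suc i) \<subseteq> \<sigma> ` F i" using f by auto
      with False have "\<sigma> ` F (Suc i) \<subset> \<sigma> ` F i" by auto
      then have "card (\<sigma> ` F (Suc i)) < card (\<sigma> ` F i)" using Fifin by (intro psubset_card_mono) auto
      then have "real (card (\<sigma> ` F (Suc i))) + 1 \<le> real (card (\<sigma> ` F i))" by linarith
      then have "r * (real (card (\<sigma> ` F (Suc i))) + 1) \<le> r * real (card (\<sigma> ` F i))"
        using r0 by (rule mult_left_mono)
      then have "2 * r * (real (card Opt) - real (card (\<sigma> ` F i))) + 2 * r \<le>
          2 * r * (real (card Opt) - real (card (\<sigma> ` F (Suc i))))"
        by (simp add: algebra_simps)
      then show ?thesis using IH(3) step Zs sub cardS by linarith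
    qed
  qed
  have fN: "F N \<subseteq> C" "card (F N) = k"
    and ZN: "kcost C d (\<sigma> ` F N) \<le> r + 2 * r * (real (card Opt) - real (card (\<sigma> ` F N)))"
    using inv[of N] N_def assms(4) by auto
  have neN: "F N \<noteq> {}" using fN assms(3) by auto
  have "card (\<sigma> ` F N) \<ge> 1"
  proof -
    have "finite (\<sigma> ` F N)" using fN fin finite_subset by blast
    moreover have "\<sigma> ` F N \<noteq> {}" using neN by auto
    ultimately show ?thesis by (simp add: Suc_leI card_gt_0_iff)
  qed
  then have "real (card Opt) - real (card (\<sigma> ` F N)) \<le> real k - 1" using Ok by linarith
  then have "2 * r * (real (card Opt) - real (card (\<sigma> ` F N))) \<le> 2 * r * (real k - 1)"
    using r0 by (intro mult_left_mono) auto
  moreover have "kcost C d (F N) \<le> kcost C d (\<sigma> ` F N) + r"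
    by (rule costZ[OF fin Cne met fN(1) neN sig])
  ultimately have "kcost C d (F N) \<le> 2 * real k * r" using ZN by (simp add: algebra_simps)
  then show ?thesis unfolding N_def r_def .
qed

end
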